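(* Let $S\subset\mathbb{R}^q$ be compact and $\ell:\mathbb{R}^q\times\mathbb{R}^q\to(0,1)$ continuous. Let $s\in S$ and let $(\xi_k)_{k\in\mathbb{N}}\subset\mathbb{R}^q$ be $n$-periodic (i.e. $\xi_{k+n}=\xi_k$ for all $k$). Let $d_1,d_2,\dots\in\{0,1\}$ be independent random variables with $\Pr(d_k=1)=\ell(s,\xi_k)$. Let $c_1,\dots,c_M\in S$ be distinct, let $\hat p_0:\{1,\dots,M\}\to(0,1)$ with $\sum_i\hat p_0(i)=1$, and define $\hat p_k$ by $$\hat p_k(i\mid d_{1:k};\xi_{1:k})=\frac{g(d_k\mid c_i;\xi_k)\,\hat p_{k-1}(i\mid d_{1:k-1};\xi_{1:k-1})}{\sum_{j=1}^M g(d_k\mid c_j;\xi_k)\,\hat p_{k-1}(j\mid d_{1:k-1};\xi_{1:k-1})},$$ where $g(d\mid x;\xi)=\ell(x,\xi)^d(1-\ell(x,\xi))^{1-d}$. Suppose $c_j=s$ for some $j$, and suppose $$\bigcap_{k=1}^n\{x\in S:\ell(x,\xi_k)=\ell(s,\xi_k)\}=\{s\}.$$ Then $\hat p_k(j\mid d_{1:k};\xi_{1:k})\to 1$ almost surely. *)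

theory Defs
  imports "HOL-Analysis.Analysis" "HOL-Probability.Probability"
begin

definition lik :: "('a \<Rightarrow> 'b \<Rightarrow> real) \<Rightarrow> nat \<Rightarrow> 'a \<Rightarrow> 'b \<Rightarrow> real" where
  "lik l d x xi = l x xi ^ d * (1 - l x xi) ^ (1 - d)"

primrec phat :: "('a \<Rightarrow> 'b \<Rightarrow> real) \<Rightarrow> (nat \<Rightarrow> 'a) \<Rightarrow> nat \<Rightarrow> (nat \<Rightarrow> real)
    \<Rightarrow> (nat \<Rightarrow> 'b) \<Rightarrow> (nat \<Rightarrow> nat) \<Rightarrow> nat \<Rightarrow> nat \<Rightarrow> real" where
  "phat l c M p0 xi d 0 i = p0 i"
| "phat l c M p0 xi d (Suc k) i =
     lik l (d (Suc k)) (c i) (xi (Suc k)) * phat l c M p0 xi d k i /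
     (\<Sum>j=1..M. lik l (d (Suc k)) (c j) (xi (Suc k)) * phat l c M p0 xi d k j)"

end

theory Submission imports Defs "HOL-Real_Asymp.Real_Asymp" begin

lemma gibbs:
  fixes p q :: real
  assumes "0 < p" "p < 1" "0 < q" "q < 1"
  shows "p * (ln q - ln p) + (1 - p) * (ln (1 - q) - ln (1 - p)) \<le> 0"
    and "q \<noteq> p \<Longrightarrow> p * (ln q - ln p) + (1 - p) * (ln (1 - q) - ln (1 - p)) < 0"
proof -
  have e1: "ln q - ln p = ln (q/p)" using assms by (simp add: ln_div)
  have e2: "ln (1-q) - ln (1-p) = ln ((1-q)/(1-p))" using assms by (simp add: ln_div)
  have a1: "ln (q/p) \<le> q/p - 1" using assms by (intro ln_le_minus_one) simp
  have a2: "ln ((1-q)/(1-p)) \<le> (1-q)/(1-p) - 1" using assms by (intro ln_le_minus_one) simp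
  have s: "p * (q/p - 1) + (1-p) * ((1-q)/(1-p) - 1) = 0" using assms by (simp add: field_simps)
  have "p * ln (q/p) \<le> p * (q/p - 1)" using a1 assms by (intro mult_left_mono) auto
  moreover have "(1-p) * ln ((1-q)/(1-p)) \<le> (1-p) * ((1-q)/(1-p) - 1)" using a2 assms by (intro mult_left_mono) auto
  ultimately show "p * (ln q - ln p) + (1 - p) * (ln (1 - q) - ln (1 - p)) \<le> 0"
    unfolding e1 e2 using s by linarith
  assume "q \<noteq> p"
  then have "q/p \<noteq> 1" using assms by auto
  then have "ln (q/p) \<noteq> q/p - 1" using ln_eq_minus_one[of "q/p"] assms by auto
  with a1 have "ln (q/p) < q/p - 1" by simp
  then have "p * ln (q/p) < p * (q/p - 1)" using assms by (intro mult_strict_left_mono) auto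
  moreover have "(1-p) * ln ((1-q)/(1-p)) \<le> (1-p) * ((1-q)/(1-p) - 1)" using a2 assms by (intro mult_left_mono) auto
  ultimately show "p * (ln q - ln p) + (1 - p) * (ln (1 - q) - ln (1 - p)) < 0"
    unfolding e1 e2 using s by linarith
qed

lemma lik_pos: assumes "\<And>x y. 0 < l x y \<and> l x y < 1" shows "0 < lik l v x y"
  using assms[of x y] unfolding lik_def by simp

lemma phat_closed:
  assumes "\<And>x y. 0 < l x y \<and> l x y < 1"
    and "\<And>i. i \<in> {1..M} \<Longrightarrow> 0 < p0 i" and "(\<Sum>i=1..M. p0 i) = 1" and "1 \<le> M"
  shows "phat l c M p0 xi d k i = p0 i * (\<Prod>m=1..k. lik l (d m) (c i) (xi m)) /
           (\<Sum>i'=1..M. p0 i' * (\<Prod>m=1..k. lik l (d m) (c i') (xi m)))"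
proof (induction k arbitrary: i)
  case 0
  then show ?case using assms by simp
next
  case (Suc k)
  define L where "L i = (\<Prod>m=1..k. lik l (d m) (c i) (xi m))" for i
  define Z where "Z = (\<Sum>i'=1..M. p0 i' * L i')"
  have Lp: "L i > 0" for i unfolding L_def using lik_pos[OF assms(1)] by (intro prod_pos) auto
  have Zp: "Z > 0" unfolding Z_def using assms(2,4) Lp
    by (intro sum_pos) (auto intro!: mult_pos_pos)
  have IH: "phat l c M p0 xi d k i' = p0 i' * L i' / Z" for i' using Suc.IH unfolding L_def Z_def by simp
  have LS: "(\<Prod>m=1..Suc k. lik l (d m) (c i') (xi m)) = lik l (d (Suc k)) (c i') (xi (Suc k)) * L i'" for i'
    unfolding L_def by (simp add: prod.nat_ivl_Suc')
  have "phat l c M p0 xi d (Suc k) i = (lik l (d (Suc k)) (c i) (xi (Suc k)) * (p0 i * L i / Z)) /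
      (\<Sum>j=1..M. lik l (d (Suc k)) (c j) (xi (Suc k)) * (p0 j * L j / Z))"
    by (simp add: IH)
  also have "\<dots> = (lik l (d (Suc k)) (c i) (xi (Suc k)) * (p0 i * L i)) /
      (\<Sum>j=1..M. lik l (d (Suc k)) (c j) (xi (Suc k)) * (p0 j * L j))"
    using Zp by (simp add: sum_divide_distrib[symmetric] times_divide_eq_right)
  also have "\<dots> = p0 i * (\<Prod>m=1..Suc k. lik l (d m) (c i) (xi m)) /
           (\<Sum>i'=1..M. p0 i' * (\<Prod>m=1..Suc k. lik l (d m) (c i') (xi m)))"
    unfolding LS by (simp add: mult_ac)
  finally show ?case .
qed

lemma main_i:
  fixes Mp :: "'w measure" and d :: "nat \<Rightarrow> 'w \<Rightarrow> nat" and l :: "'a \<Rightarrow> 'b \<Rightarrow> real"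
    and xi :: "nat \<Rightarrow> 'b"
  assumes P: "prob_space Mp"
    and ind: "prob_space.indep_vars Mp (\<lambda>_. count_space UNIV) d {1..}"
    and d01: "\<And>k \<omega>. 1 \<le> k \<Longrightarrow> \<omega> \<in> space Mp \<Longrightarrow> d k \<omega> \<in> {0, 1}"
    and pd: "\<And>k. 1 \<le> k \<Longrightarrow> measure Mp {\<omega> \<in> space Mp. d k \<omega> = 1} = l s (xi k)"
    and lb: "\<And>x y. 0 < l x y \<and> l x y < 1"
    and n: "0 < n" and per: "\<And>k. xi (k + n) = xi k"
    and k0: "k0 \<in> {1..n}" "l x (xi k0) \<noteq> l s (xi k0)"
  shows "AE \<omega> in Mp. filterlim (\<lambda>k. \<Sum>m=1..k. ln (lik l (d m \<omega>) x (xi m)) - ln (lik l (d m \<omega>) s (xi m))) at_bot sequentially"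
proof -
  interpret P: prob_space Mp by (rule P)
  define Y where "Y m \<omega> = ln (lik l (d m \<omega>) x (xi m)) - ln (lik l (d m \<omega>) s (xi m))" for m \<omega>
  have lik1: "lik l 1 a b = l a b" for a b by (simp add: lik_def)
  have lik0: "lik l 0 a b = 1 - l a b" for a b by (simp add: lik_def)
  have meas_d: "d m \<in> measurable Mp (count_space UNIV)" if "1 \<le> m" for m
    using ind that unfolding P.indep_vars_def by auto
  have measY: "Y m \<in> borel_measurable Mp" if "1 \<le> m" for m
  proof -
    have "Y m = (\<lambda>v. ln (lik l v x (xi m)) - ln (lik l v s (xi m))) \<circ> d m"
      by (auto simp: Y_def)
    then show ?thesis using measurable_comp[OF meas_d[OF that], of _ borel] by simp
  qed
  have per2: "xi (r + t*n) = xi r" for r t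
  proof (induction t)
    case (Suc t)
    have "r + Suc t * n = (r + t*n) + n" by simp
    then show ?case using per[of "r + t*n"] Suc.IH by metis
  qed simp
  have permod: "xi m = xi (m mod n)" for m
    using per2[of "m mod n" "m div n"] by (simp add: mod_div_mult_eq)
  define G where "G \<xi> = l s \<xi> * (ln (l x \<xi>) - ln (l s \<xi>)) + (1 - l s \<xi>) * (ln (1 - l x \<xi>) - ln (1 - l s \<xi>))" for \<xi>
  have EY: "P.expectation (Y m) = G (xi m)" if m: "1 \<le> m" for m
  proof -
    define E where "E = {\<omega>\<in>space Mp. d m \<omega> = 1}"
    have E: "E \<in> P.events" unfolding E_def using meas_d[OF m] by measurable
    define f0 where "f0 = ln (1 - l x (xi m)) - ln (1 - l s (xi m))"
    define f1 where "f1 = ln (l x (xi m)) - ln (l s (xi m))"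
    have "P.expectation (Y m) = P.expectation (\<lambda>\<omega>. f0 + (f1 - f0) * indicator E \<omega>)"
    proof (rule Bochner_Integration.integral_cong[OF refl])
      fix \<omega> assume "\<omega> \<in> space Mp"
      then show "Y m \<omega> = f0 + (f1 - f0) * indicator E \<omega>"
        using d01[OF m, of \<omega>] by (auto simp: Y_def E_def f0_def f1_def lik_def indicator_def)
    qed
    also have "\<dots> = f0 + (f1 - f0) * P.prob E"
    proof -
      have i1: "integrable Mp (\<lambda>\<omega>. f0)" by simp
      have i2: "integrable Mp (\<lambda>\<omega>. (f1 - f0) * indicator E \<omega>)"
        using E by (intro integrable_mult_right integrable_real_indicator) (auto simp: P.emeasure_finite less_top[symmetric])
      have "P.expectation (\<lambda>\<omega>. f0 + (f1 - f0) * indicator E \<omega>) =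
         P.expectation (\<lambda>\<omega>. f0) + P.expectation (\<lambda>\<omega>. (f1 - f0) * indicator E \<omega>)"
        by (rule Bochner_Integration.integral_add[OF i1 i2])
      also have "\<dots> = f0 + (f1 - f0) * P.prob E"
        using E by (simp add: P.emeasure_finite less_top[symmetric] P.prob_space)
      finally show ?thesis .
    qed
    also have "P.prob E = l s (xi m)" unfolding E_def using pd[OF m] .
    finally show ?thesis by (simp add: G_def f0_def f1_def algebra_simps)
  qed
  define Bm where "Bm m = \<bar>ln (l x (xi m)) - ln (l s (xi m))\<bar> + \<bar>ln (1 - l x (xi m)) - ln (1 - l s (xi m))\<bar> + 1" for m
  have YB: "Y m \<omega> \<in> {- Bm m .. Bm m}" if "1 \<le> m" "\<omega> \<in> space Mp" for m \<omega>
    using d01[OF that] by (auto simp: Y_def Bm_def lik_def)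
  define Bmax where "Bmax = Max (Bm ` {..<n})"
  have BB: "Bm m \<le> Bmax" for m
  proof -
    have "Bm m = Bm (m mod n)" unfolding Bm_def using permod[of m] by simp
    also have "\<dots> \<le> Bmax" unfolding Bmax_def using n by (intro Max_ge) auto
    finally show ?thesis .
  qed
  have Bm1: "1 \<le> Bm m" for m unfolding Bm_def by simp
  have Bmax1: "1 \<le> Bmax" using BB[of 0] Bm1[of 0] by simp
  have Gle: "G \<xi> \<le> 0" for \<xi> unfolding G_def using gibbs(1)[of "l s \<xi>" "l x \<xi>"] lb by auto
  define \<kappa> where "\<kappa> = - G (xi k0)"
  have \<kappa>: "\<kappa> > 0" unfolding \<kappa>_def G_def using gibbs(2)[of "l s (xi k0)" "l x (xi k0)"] lb k0(2) by auto
  have musum: "(\<Sum>m=1..k. G (xi m)) \<le> - \<kappa> * real (k div n)" for k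
  proof -
    define g where "g t = k0 + t * n" for t
    have inj: "inj_on g {..<k div n}" unfolding g_def inj_on_def using n by auto
    have sub: "g ` {..<k div n} \<subseteq> {1..k}"
    proof
      fix m assume "m \<in> g ` {..<k div n}"
      then obtain t where t: "t < k div n" "m = k0 + t * n" unfolding g_def by auto
      have "k0 + t * n \<le> n + t * n" using k0 by auto
      also have "\<dots> = Suc t * n" by simp
      also have "\<dots> \<le> (k div n) * n" using t by (intro mult_right_mono) auto
      also have "\<dots> \<le> k" by (metis div_mult_mod_eq le_add1)
      finally show "m \<in> {1..k}" using t k0 by auto
    qed
    have "(\<Sum>m=1..k. - G (xi m)) \<ge> (\<Sum>m\<in>g ` {..<k div n}. - G (xi m))"
      using sub Gle by (intro sum_mono2) auto
    also have "(\<Sum>m\<in>g ` {..<k div n}. - G (xi m)) = (\<Sum>t<k div n. - G (xi (g t)))"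
      by (rule sum.reindex[OF inj, unfolded comp_def])
    also have "\<dots> = (\<Sum>t<k div n. \<kappa>)" unfolding g_def \<kappa>_def using per2 by simp
    finally show ?thesis by (simp add: sum_negf mult.commute)
  qed
  define \<delta> where "\<delta> = \<kappa> / (2 * n)"
  have \<delta>: "\<delta> > 0" using \<kappa> n by (simp add: \<delta>_def)
  define D where "D = 4 * Bmax^2"
  have D: "D > 0" using Bmax1 by (simp add: D_def)
  define A where "A k = {\<omega>\<in>space Mp. (\<Sum>m=1..k. G (xi m)) + \<delta> * k \<le> (\<Sum>m=1..k. Y m \<omega>)}" for k
  have Ameas: "A k \<in> P.events" for k
  proof -
    have "(\<lambda>\<omega>. \<Sum>m=1..k. Y m \<omega>) \<in> borel_measurable Mp"
      using measY by (intro borel_measurable_sum) auto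
    then show ?thesis unfolding A_def by measurable
  qed
  define r where "r = exp (- 2 * \<delta>^2 / D)"
  have Abound: "P.prob (A k) \<le> r ^ k" if k: "k \<ge> 1" for k
  proof -
    interpret H: Hoeffding_ineq Mp "{1..k}" Y "\<lambda>m. - Bm m" Bm "\<Sum>m\<in>{1..k}. P.expectation (Y m)"
    proof unfold_locales
      show "P.indep_vars (\<lambda>_. borel) Y {1..k}"
      proof -
        have "P.indep_vars (\<lambda>_. count_space UNIV) d {1..k}"
          by (rule P.indep_vars_subset[OF ind]) auto
        then have "P.indep_vars (\<lambda>_. borel) (\<lambda>m \<omega>. (\<lambda>v. ln (lik l v x (xi m)) - ln (lik l v s (xi m))) (d m \<omega>)) {1..k}"
          by (rule P.indep_vars_compose2) auto
        then show ?thesis by (simp add: Y_def[abs_def])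
      qed
    next
      fix i assume "i \<in> {1..k}"
      then show "AE \<omega> in Mp. Y i \<omega> \<in> {- Bm i..Bm i}" using YB by auto
    qed auto
    have S: "(\<Sum>m\<in>{1..k}. (Bm m - - Bm m)\<^sup>2) \<le> D * k"
    proof -
      have "(\<Sum>m\<in>{1..k}. (Bm m - - Bm m)\<^sup>2) \<le> (\<Sum>m\<in>{1..k}. D)"
      proof (intro sum_mono)
        fix m
        have "0 \<le> 2 * Bm m" using Bm1[of m] by simp
        then have "(2 * Bm m)^2 \<le> (2 * Bmax)^2" using BB[of m] by (intro power_mono) auto
        then show "(Bm m - - Bm m)\<^sup>2 \<le> D" by (simp add: D_def power_mult_distrib)
      qed
      then show ?thesis by (simp add: mult.commute)
    qed
    have Spos: "(\<Sum>m\<in>{1..k}. (Bm m - - Bm m)\<^sup>2) > 0"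
      using k Bm1 by (intro sum_pos) (auto intro!: add_pos_pos, metis Bm1 not_one_le_zero)
    have mu: "(\<Sum>m\<in>{1..k}. P.expectation (Y m)) = (\<Sum>m=1..k. G (xi m))"
      using EY by (intro sum.cong) auto
    have "P.prob (A k) \<le> exp (-2 * (\<delta> * k)\<^sup>2 / (\<Sum>m\<in>{1..k}. (Bm m - - Bm m)\<^sup>2))"
      using H.Hoeffding_ineq_ge[of "\<delta> * k", OF _ Spos] \<delta> unfolding A_def mu by simp
    also have "\<dots> \<le> exp (-2 * (\<delta> * k)\<^sup>2 / (D * k))"
    proof -
      have "2 * (\<delta> * k)\<^sup>2 / (D * k) \<le> 2 * (\<delta> * k)\<^sup>2 / (\<Sum>m\<in>{1..k}. (Bm m - - Bm m)\<^sup>2)"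
        using S Spos by (intro divide_left_mono) auto
      then show ?thesis by simp
    qed
    also have "-2 * (\<delta> * k)\<^sup>2 / (D * k) = k * (- 2 * \<delta>^2 / D)"
      using k D by (simp add: field_simps power2_eq_square)
    also have "exp (k * (- 2 * \<delta>^2 / D)) = r ^ k"
      unfolding r_def by (simp add: exp_of_nat_mult[symmetric])
    finally show ?thesis .
  qed
  have r: "0 < r" "r < 1" using \<delta> D by (auto simp: r_def)
  have summ: "summable (\<lambda>k. P.prob (A k))"
    by (rule summable_comparison_test'[where N=1, OF summable_geometric[of r]]) (use r Abound in auto)
  have "AE \<omega> in Mp. eventually (\<lambda>k. \<omega> \<in> space Mp - A k) sequentially"
    by (rule borel_cantelli_AE1[OF Ameas _ summ]) (simp add: P.emeasure_finite less_top[symmetric])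
  then show ?thesis
  proof (rule AE_mp, intro AE_I2 impI)
    fix \<omega> assume "\<omega> \<in> space Mp" and ev: "eventually (\<lambda>k. \<omega> \<in> space Mp - A k) sequentially"
    have lim: "filterlim (\<lambda>k::nat. \<kappa> - \<kappa> * real k / (2 * n)) at_bot sequentially"
      using \<kappa> n by real_asymp
    show "filterlim (\<lambda>k. \<Sum>m=1..k. ln (lik l (d m \<omega>) x (xi m)) - ln (lik l (d m \<omega>) s (xi m))) at_bot sequentially"
    proof (rule filterlim_at_bot_mono[OF lim], use ev in \<open>eventually_elim\<close>)
      case (elim k)
      have "k < (k div n + 1) * n" using n by (metis div_mult_mod_eq mod_less_divisor add_mult_distrib mult_1 nat_add_left_cancel_less)
      then have "real k < (real (k div n) + 1) * n" by (metis of_nat_1 of_nat_add of_nat_less_iff of_nat_mult)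
      then have kd: "real k / n - 1 < real (k div n)" using n by (simp add: field_simps)
      have "(\<Sum>m=1..k. Y m \<omega>) < (\<Sum>m=1..k. G (xi m)) + \<delta> * k" using elim \<open>\<omega> \<in> space Mp\<close> by (auto simp: A_def)
      also have "\<dots> \<le> - \<kappa> * real (k div n) + \<delta> * k" using musum[of k] by simp
      also have "\<dots> \<le> - \<kappa> * (real k / n - 1) + \<delta> * k" using kd \<kappa> by (intro add_right_mono) (simp add: mult_left_mono)
      also have "\<dots> = \<kappa> - \<kappa> * real k / (2 * n)" using n by (simp add: \<delta>_def field_simps)
      finally show ?case by (simp add: Y_def)
    qed
  qed
qed

theorem corollary1:
  fixes S :: "(real ^ 'q) set"
    and l :: "real ^ 'q \<Rightarrow> real ^ 'q \<Rightarrow> real"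
    and s :: "real ^ 'q"
    and xi :: "nat \<Rightarrow> real ^ 'q"
    and n M j :: nat
    and Mp :: "'w measure"
    and d :: "nat \<Rightarrow> 'w \<Rightarrow> nat"
    and c :: "nat \<Rightarrow> real ^ 'q"
    and p0 :: "nat \<Rightarrow> real"
  assumes "compact S"
    and "continuous_on UNIV (\<lambda>(x, y). l x y)"
    and "\<And>x y. 0 < l x y \<and> l x y < 1"
    and "s \<in> S"
    and "0 < n" and "\<And>k. xi (k + n) = xi k"
    and "prob_space Mp"
    and "prob_space.indep_vars Mp (\<lambda>_. count_space UNIV) d {1..}"
    and "\<And>k \<omega>. 1 \<le> k \<Longrightarrow> \<omega> \<in> space Mp \<Longrightarrow> d k \<omega> \<in> {0, 1}"
    and "\<And>k. 1 \<le> k \<Longrightarrow> measure Mp {\<omega> \<in> space Mp. d k \<omega> = 1} = l s (xi k)"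
    and "inj_on c {1..M}" and "c ` {1..M} \<subseteq> S"
    and "\<And>i. i \<in> {1..M} \<Longrightarrow> 0 < p0 i \<and> p0 i < 1"
    and "(\<Sum>i=1..M. p0 i) = 1"
    and "j \<in> {1..M}" and "c j = s"
    and "(\<Inter>k\<in>{1..n}. {x \<in> S. l x (xi k) = l s (xi k)}) = {s}"
  shows "AE \<omega> in Mp. (\<lambda>k. phat l c M p0 xi (\<lambda>k. d k \<omega>) k j) \<longlonglongrightarrow> 1"
proof -
  note lb = assms(3)
  interpret P: prob_space Mp by (rule assms(7))
  have lp: "0 < lik l v a b" for v a b by (rule lik_pos) (rule lb)
  have M1: "1 \<le> M" using assms(15) by auto
  define L where "L \<omega> k i = (\<Prod>m=1..k. lik l (d m \<omega>) (c i) (xi m))" for \<omega> k i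
  define R where "R \<omega> k i = (\<Sum>m=1..k. ln (lik l (d m \<omega>) (c i) (xi m)) - ln (lik l (d m \<omega>) s (xi m)))" for \<omega> k i
  define J where "J = {1..M} - {j}"
  have finJ: "finite J" unfolding J_def by simp
  have Lpos: "L \<omega> k i > 0" for \<omega> k i unfolding L_def using lp by (intro prod_pos) auto
  have ratio: "L \<omega> k i / L \<omega> k j = exp (R \<omega> k i)" for \<omega> k i
  proof -
    have "exp (R \<omega> k i) = (\<Prod>m=1..k. exp (ln (lik l (d m \<omega>) (c i) (xi m)) - ln (lik l (d m \<omega>) s (xi m))))"
      unfolding R_def by (rule exp_sum) simp
    also have "\<dots> = (\<Prod>m=1..k. lik l (d m \<omega>) (c i) (xi m) / lik l (d m \<omega>) s (xi m))"
      using lp by (intro prod.cong refl) (simp add: exp_diff)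
    also have "\<dots> = L \<omega> k i / L \<omega> k j" unfolding L_def assms(16) by (rule prod_dividef)
    finally show ?thesis by simp
  qed
  have AEi: "AE \<omega> in Mp. filterlim (\<lambda>k. R \<omega> k i) at_bot sequentially" if i: "i \<in> J" for i
  proof -
    have ci: "c i \<noteq> s"
    proof
      assume "c i = s"
      then have "c i = c j" using assms(16) by simp
      then have "i = j" using inj_onD[OF assms(11)] i assms(15) unfolding J_def by blast
      with i show False unfolding J_def by blast
    qed
    have ciS: "c i \<in> S" using i assms(12) unfolding J_def by blast
    have nin: "c i \<notin> (\<Inter>k\<in>{1..n}. {x \<in> S. l x (xi k) = l s (xi k)})"
    proof
      assume "c i \<in> (\<Inter>k\<in>{1..n}. {x \<in> S. l x (xi k) = l s (xi k)})"
      then have "c i \<in> {s}" by (simp only: assms(17))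
      with ci show False by blast
    qed
    then obtain k0 where k0a: "k0 \<in> {1..n}" "c i \<notin> {x \<in> S. l x (xi k0) = l s (xi k0)}" by blast
    have k0: "k0 \<in> {1..n}" "l (c i) (xi k0) \<noteq> l s (xi k0)" using k0a ciS by auto
    show ?thesis unfolding R_def
      by (rule main_i[OF assms(7,8,9,10) lb assms(5,6) k0])
  qed
  have "AE \<omega> in Mp. \<forall>i\<in>J. filterlim (\<lambda>k. R \<omega> k i) at_bot sequentially"
    by (rule AE_finite_allI[OF finJ]) (rule AEi)
  then show ?thesis
  proof (rule AE_mp, intro AE_I2 impI)
    fix \<omega> assume lim: "\<forall>i\<in>J. filterlim (\<lambda>k. R \<omega> k i) at_bot sequentially"
    have cf: "phat l c M p0 xi (\<lambda>k. d k \<omega>) k j = p0 j / (p0 j + (\<Sum>i\<in>J. p0 i * exp (R \<omega> k i)))" for k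
    proof -
      have "phat l c M p0 xi (\<lambda>k. d k \<omega>) k j = p0 j * L \<omega> k j / (\<Sum>i=1..M. p0 i * L \<omega> k i)"
        unfolding L_def by (rule phat_closed[OF lb _ assms(14) M1]) (use assms(13) in auto)
      also have "\<dots> = p0 j / ((\<Sum>i=1..M. p0 i * L \<omega> k i) / L \<omega> k j)"
        using Lpos[of \<omega> k j] by (simp add: field_simps)
      also have "(\<Sum>i=1..M. p0 i * L \<omega> k i) / L \<omega> k j = (\<Sum>i=1..M. p0 i * (L \<omega> k i / L \<omega> k j))"
        by (simp add: sum_divide_distrib)
      also have "\<dots> = p0 j * (L \<omega> k j / L \<omega> k j) + (\<Sum>i\<in>J. p0 i * (L \<omega> k i / L \<omega> k j))"
        unfolding J_def using assms(15) by (subst sum.remove[of _ j]) auto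
      also have "\<dots> = p0 j + (\<Sum>i\<in>J. p0 i * exp (R \<omega> k i))"
        using Lpos[of \<omega> k j] by (simp add: ratio)
      finally show ?thesis .
    qed
    have "(\<lambda>k. \<Sum>i\<in>J. p0 i * exp (R \<omega> k i)) \<longlonglongrightarrow> (\<Sum>i\<in>J. p0 i * 0)"
    proof (intro tendsto_sum tendsto_mult tendsto_const)
      fix i assume "i \<in> J"
      then show "(\<lambda>k. exp (R \<omega> k i)) \<longlonglongrightarrow> 0"
        using lim filterlim_compose[OF exp_at_bot] by blast
    qed
    then have "(\<lambda>k. p0 j / (p0 j + (\<Sum>i\<in>J. p0 i * exp (R \<omega> k i)))) \<longlonglongrightarrow> p0 j / (p0 j + 0)"
      using assms(13)[OF assms(15)] by (intro tendsto_divide tendsto_add tendsto_const) auto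
    moreover have "p0 j / (p0 j + 0) = 1" using assms(13)[OF assms(15)] by simp
    ultimately show "(\<lambda>k. phat l c M p0 xi (\<lambda>k. d k \<omega>) k j) \<longlonglongrightarrow> 1"
      unfolding cf by simp
  qed
qed

end
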